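(* For each $n\ge1$ let $f_n:\{1,\dots,n\}^2\to[0,\infty)$ be non-decreasing in each of its two arguments separately. Suppose that $\liminf_{n\to\infty}f_n(p_n,q_n)>0$ for every sequence $\{(p_n,q_n)\}$ with $1\le q_n\le p_n\le n$ satisfying any one of the following conditions: (i) $q_n\equiv1$ and $\lim_{n\to\infty}p_n/n$ exists and lies in $(0,1)$; (ii) $q_n\to\infty$, $\lim_{n\to\infty}q_n/p_n=0$, and $\lim_{n\to\infty}p_nq_n/n$ exists and lies in $(0,\infty)$; (iii) $\lim_{n\to\infty}p_n/\sqrt n$ and $\lim_{n\to\infty}q_n/\sqrt n$ exist and lie in $(0,\infty)$. Then $\liminf_{n\to\infty}f_n(p_n,q_n)>0$ for every sequence $\{(p_n,q_n)\}$ with $1\le q_n\le p_n\le n$ such that $\lim_{n\to\infty}p_nq_n/n$ exists and lies in $(0,\infty)$. *)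

theory Defs
  imports Complex_Main "HOL-Library.Extended_Real"
begin

definition admissible :: "(nat \<Rightarrow> nat) \<Rightarrow> (nat \<Rightarrow> nat) \<Rightarrow> bool" where
  "admissible p q \<longleftrightarrow> (\<forall>n\<ge>1. 1 \<le> q n \<and> q n \<le> p n \<and> p n \<le> n)"

end

theory Submission
  imports Defs "HOL-Analysis.Extended_Real_Limits" "HOL-Real_Asymp.Real_Asymp"
begin

lemma interleave:
  assumes R: "strict_mono R" and s: "filterlim (\<lambda>j. s (R j)) F sequentially"
    and d: "filterlim d F sequentially"
  shows "filterlim (\<lambda>n. if n \<in> range R then s n else d n) F sequentially"
  unfolding filterlim_iff
proof (intro allI impI)
  fix P assume P: "eventually P F"
  from s P obtain K where K: "\<And>j. j \<ge> K \<Longrightarrow> P (s (R j))"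
    unfolding filterlim_iff eventually_sequentially by blast
  from d P obtain N where N: "\<And>n. n \<ge> N \<Longrightarrow> P (d n)"
    unfolding filterlim_iff eventually_sequentially by blast
  show "eventually (\<lambda>n. P (if n \<in> range R then s n else d n)) sequentially"
    unfolding eventually_sequentially
  proof (intro exI allI impI)
    fix n assume n: "n \<ge> max (R K) N"
    show "P (if n \<in> range R then s n else d n)"
    proof (cases "n \<in> range R")
      case True
      then obtain j where j: "n = R j" by auto
      with n have "R K \<le> R j" by simp
      then have "K \<le> j" using R by (simp add: strict_mono_less_eq)
      then show ?thesis using K j True by simp
    next
      case False then show ?thesis using N n by simp
    qed
  qed
qed

lemma floor_lim:
  fixes g :: "nat \<Rightarrow> real"
  assumes g: "filterlim g at_top sequentially" and a: "\<alpha> > 0"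
  shows "(\<lambda>n. real (max 1 (nat \<lfloor>\<alpha> * g n\<rfloor>)) / g n) \<longlonglongrightarrow> \<alpha>"
proof (rule tendsto_sandwich)
  have ev: "eventually (\<lambda>n. g n \<ge> 1/\<alpha> \<and> g n > 0) sequentially"
    using g a unfolding filterlim_at_top_dense
    by (smt (verit, ccfv_threshold) divide_pos_pos eventually_at_top_linorder filterlim_at_top g)
  have ev2: "eventually (\<lambda>n. g n \<ge> 1/\<alpha>) sequentially" "eventually (\<lambda>n. g n > 0) sequentially"
    using ev by (auto elim: eventually_mono)
  show "eventually (\<lambda>n. \<alpha> - inverse (g n) \<le> real (max 1 (nat \<lfloor>\<alpha> * g n\<rfloor>)) / g n) sequentially"
    using ev
  proof (rule eventually_mono)
    fix n assume h: "g n \<ge> 1/\<alpha> \<and> g n > 0"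
    then have "\<alpha> * g n \<ge> 1" using a by (simp add: field_simps)
    then have f1: "1 \<le> \<lfloor>\<alpha> * g n\<rfloor>" by (simp add: le_floor_iff)
    then have e: "real (max 1 (nat \<lfloor>\<alpha> * g n\<rfloor>)) = of_int \<lfloor>\<alpha> * g n\<rfloor>" by (smt (verit) of_nat_nat max.absorb2 nat_mono nat_one_as_int of_int_of_nat_eq)
    have "\<alpha> * g n - 1 \<le> of_int \<lfloor>\<alpha> * g n\<rfloor>" by linarith
    then have "(\<alpha> * g n - 1) / g n \<le> of_int \<lfloor>\<alpha> * g n\<rfloor> / g n"
      using h by (simp add: divide_right_mono)
    moreover have "\<alpha> - inverse (g n) = (\<alpha> * g n - 1) / g n" using h by (simp add: field_simps)
    ultimately show "\<alpha> - inverse (g n) \<le> real (max 1 (nat \<lfloor>\<alpha> * g n\<rfloor>)) / g n"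
      using e by metis
  qed
  show "eventually (\<lambda>n. real (max 1 (nat \<lfloor>\<alpha> * g n\<rfloor>)) / g n \<le> \<alpha>) sequentially"
    using ev
  proof (rule eventually_mono)
    fix n assume h: "g n \<ge> 1/\<alpha> \<and> g n > 0"
    then have "\<alpha> * g n \<ge> 1" using a by (simp add: field_simps)
    then have f1: "1 \<le> \<lfloor>\<alpha> * g n\<rfloor>" by (simp add: le_floor_iff)
    then have e: "real (max 1 (nat \<lfloor>\<alpha> * g n\<rfloor>)) = of_int \<lfloor>\<alpha> * g n\<rfloor>" by (smt (verit) of_nat_nat max.absorb2 nat_mono nat_one_as_int of_int_of_nat_eq)
    have "of_int \<lfloor>\<alpha> * g n\<rfloor> \<le> \<alpha> * g n" by linarith
    then have "of_int \<lfloor>\<alpha> * g n\<rfloor> / g n \<le> \<alpha>"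
      using h by (simp add: pos_divide_le_eq mult.commute)
    then show "real (max 1 (nat \<lfloor>\<alpha> * g n\<rfloor>)) / g n \<le> \<alpha>"
      using e by metis
  qed
  have "(\<lambda>n. \<alpha> - inverse (g n)) \<longlonglongrightarrow> \<alpha> - 0"
    by (intro tendsto_intros tendsto_inverse_0_at_top g)
  then show "(\<lambda>n. \<alpha> - inverse (g n)) \<longlonglongrightarrow> \<alpha>" by simp
qed simp

lemma default_ii:
  fixes c :: real assumes c: "c > 0"
  shows "\<exists>P Q :: nat \<Rightarrow> nat. (\<forall>n\<ge>1. 1 \<le> Q n \<and> Q n \<le> P n \<and> P n \<le> n) \<and>
     filterlim Q at_top sequentially \<and> (\<lambda>n. real (Q n) / real (P n)) \<longlonglongrightarrow> 0 \<and>
     (\<lambda>n. real (P n) * real (Q n) / real n) \<longlonglongrightarrow> c"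
proof -
  define Q where "Q = (\<lambda>n::nat. max 1 (nat \<lfloor>sqrt (sqrt (real n))\<rfloor>))"
  define P where "P = (\<lambda>n. min n (max (Q n) (nat \<lfloor>c * real n / real (Q n)\<rfloor>)))"
  have Qb: "real (Q n) \<le> sqrt (sqrt (real n)) \<and> sqrt (sqrt (real n)) - 1 \<le> real (Q n) \<and> 1 \<le> Q n"
    if n: "n \<ge> 1" for n
  proof -
    have s1: "1 \<le> sqrt (sqrt (real n))" using n by simp
    then have f1: "1 \<le> \<lfloor>sqrt (sqrt (real n))\<rfloor>" by (simp add: le_floor_iff)
    then have e: "real (Q n) = of_int \<lfloor>sqrt (sqrt (real n))\<rfloor>" unfolding Q_def
      by (smt (verit) of_nat_nat max.absorb2 nat_mono nat_one_as_int of_int_of_nat_eq)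
    show ?thesis using e f1 unfolding Q_def by linarith
  qed
  have sqle: "sqrt x \<le> x" if "x \<ge> 1" for x :: real
  proof -
    have s1: "sqrt x \<ge> 1" using that by simp
    have "1 * sqrt x \<le> sqrt x * sqrt x" by (rule mult_right_mono) (use s1 in auto)
    then show ?thesis using that by simp
  qed
  have sq: "sqrt (sqrt (real n)) \<le> real n" if "n \<ge> 1" for n
  proof -
    have "sqrt (real n) \<le> real n" using that sqle by simp
    moreover have "sqrt (sqrt (real n)) \<le> sqrt (real n)" using that sqle by simp
    ultimately show ?thesis by linarith
  qed
  have Q2: "real (Q n) ^ 2 \<le> sqrt (real n)" if "n \<ge> 1" for n
  proof -
    have "real (Q n) ^ 2 \<le> sqrt (sqrt (real n)) ^ 2"
      using Qb[OF that] by (intro power_mono) auto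
    then show ?thesis by simp
  qed
  have adm: "\<forall>n\<ge>1. 1 \<le> Q n \<and> Q n \<le> P n \<and> P n \<le> n"
  proof (intro allI impI)
    fix n :: nat assume n: "n \<ge> 1"
    have "real (Q n) \<le> real n" using Qb[OF n] sq[OF n] by linarith
    then show "1 \<le> Q n \<and> Q n \<le> P n \<and> P n \<le> n" using Qb[OF n] unfolding P_def by auto
  qed
  have limQ: "filterlim (\<lambda>n. real (Q n)) at_top sequentially"
  proof (rule filterlim_at_top_mono)
    show "filterlim (\<lambda>n::nat. sqrt (sqrt (real n)) - 1) at_top sequentially" by real_asymp
    show "eventually (\<lambda>n. sqrt (sqrt (real n)) - 1 \<le> real (Q n)) sequentially"
      using Qb eventually_sequentially by blast
  qed
  then have limQ': "filterlim Q at_top sequentially"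
    by (simp add: filterlim_sequentially_iff_filterlim_real)
  have inv0: "(\<lambda>n::nat. 1 / sqrt (real n)) \<longlonglongrightarrow> 0" by real_asymp
  have Q2n: "(\<lambda>n. real (Q n) ^ 2 / real n) \<longlonglongrightarrow> 0"
  proof (rule tendsto_sandwich[OF _ _ tendsto_const inv0])
    show "eventually (\<lambda>n. 0 \<le> real (Q n) ^ 2 / real n) sequentially" by simp
    show "eventually (\<lambda>n. real (Q n) ^ 2 / real n \<le> 1 / sqrt (real n)) sequentially"
      unfolding eventually_sequentially
    proof (intro exI allI impI)
      fix n :: nat assume n: "n \<ge> 1"
      have "real (Q n) ^ 2 / real n \<le> sqrt (real n) / real n"
        using Q2[OF n] n by (simp add: divide_right_mono)
      also have "\<dots> = 1 / sqrt (real n)" using n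
        by (metis real_div_sqrt of_nat_0_le_iff div_by_1 divide_divide_eq_right mult_1 sqrt_divide_self_eq)
      finally show "real (Q n) ^ 2 / real n \<le> 1 / sqrt (real n)" .
    qed
  qed
  have Qn: "(\<lambda>n. real (Q n) / real n) \<longlonglongrightarrow> 0"
  proof (rule tendsto_sandwich[OF _ _ tendsto_const Q2n])
    show "eventually (\<lambda>n. 0 \<le> real (Q n) / real n) sequentially" by simp
    show "eventually (\<lambda>n. real (Q n) / real n \<le> real (Q n) ^ 2 / real n) sequentially"
      unfolding eventually_sequentially
    proof (intro exI allI impI)
      fix n :: nat assume n: "n \<ge> 1"
      have "real (Q n) \<le> real (Q n) ^ 2" using Qb[OF n] by (simp add: power2_eq_square)
      then show "real (Q n) / real n \<le> real (Q n) ^ 2 / real n" by (simp add: divide_right_mono)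
    qed
  qed
  have ev1: "eventually (\<lambda>n. c \<le> real (Q n)) sequentially"
    using limQ by (simp add: filterlim_at_top)
  have ev2: "eventually (\<lambda>n::nat. 1 \<le> c * sqrt (real n)) sequentially"
    using c by real_asymp
  have evP: "eventually (\<lambda>n. real (P n) = of_int \<lfloor>c * real n / real (Q n)\<rfloor> \<and> n \<ge> 1) sequentially"
    using ev1 ev2 eventually_ge_at_top[of 1]
  proof eventually_elim
    case (elim n)
    then have n: "n \<ge> 1" by simp
    have qpos: "real (Q n) > 0" using Qb[OF n] by simp
    have "real (Q n) * real (Q n) \<le> sqrt (real n)" using Q2[OF n] by (simp add: power2_eq_square)
    also have "\<dots> \<le> c * real n"
    proof -
      have "sqrt (real n) = sqrt (real n) * 1" by simp
      also have "\<dots> \<le> sqrt (real n) * (c * sqrt (real n))" using elim by (intro mult_left_mono) auto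
      also have "\<dots> = c * real n" by simp
      finally show ?thesis .
    qed
    finally have "real (Q n) \<le> c * real n / real (Q n)" using qpos by (simp add: field_simps)
    then have l: "int (Q n) \<le> \<lfloor>c * real n / real (Q n)\<rfloor>" by (simp add: le_floor_iff)
    have "c * real n / real (Q n) \<le> real n" using elim qpos c
      by (simp add: divide_le_eq mult_left_mono mult.commute)
    then have u: "\<lfloor>c * real n / real (Q n)\<rfloor> \<le> int n" by (simp add: floor_le_iff)
    have "P n = nat \<lfloor>c * real n / real (Q n)\<rfloor>" unfolding P_def using l u by auto
    then show ?case using l n by simp
  qed
  have PQ: "(\<lambda>n. real (P n) * real (Q n) / real n) \<longlonglongrightarrow> c"
  proof (rule tendsto_sandwich)
    have "(\<lambda>n. c - real (Q n) / real n) \<longlonglongrightarrow> c - 0" by (intro tendsto_intros Qn)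
    then show "(\<lambda>n. c - real (Q n) / real n) \<longlonglongrightarrow> c" by simp
    show "(\<lambda>n. c) \<longlonglongrightarrow> c" by simp
    show "eventually (\<lambda>n. c - real (Q n) / real n \<le> real (P n) * real (Q n) / real n) sequentially"
      using evP
    proof eventually_elim
      case (elim n)
      then have n: "n \<ge> 1" by simp
      have qpos: "real (Q n) > 0" using Qb[OF n] by simp
      let ?x = "c * real n / real (Q n)"
      have "?x - 1 \<le> of_int \<lfloor>?x\<rfloor>" by linarith
      then have "(?x - 1) * real (Q n) \<le> real (P n) * real (Q n)" using elim qpos by (intro mult_right_mono) auto
      moreover have "(?x - 1) * real (Q n) = c * real n - real (Q n)" using qpos by (simp add: left_diff_distrib)
      ultimately have h: "c * real n - real (Q n) \<le> real (P n) * real (Q n)" by linarith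
      have np: "real n > 0" using n by simp
      have "c - real (Q n) / real n = (c * real n - real (Q n)) / real n"
        using np by (simp add: diff_divide_distrib)
      also have "\<dots> \<le> real (P n) * real (Q n) / real n"
        using h np by (intro divide_right_mono) auto
      finally show ?case .
    qed
    show "eventually (\<lambda>n. real (P n) * real (Q n) / real n \<le> c) sequentially"
      using evP
    proof eventually_elim
      case (elim n)
      then have n: "n \<ge> 1" by simp
      have qpos: "real (Q n) > 0" using Qb[OF n] by simp
      let ?x = "c * real n / real (Q n)"
      have "of_int \<lfloor>?x\<rfloor> \<le> ?x" by linarith
      then have "real (P n) * real (Q n) \<le> ?x * real (Q n)" using elim qpos by (intro mult_right_mono) auto
      then have "real (P n) * real (Q n) \<le> c * real n" using qpos by (simp add: field_simps)
      then show ?case using n by (simp add: field_simps)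
    qed
  qed
  have QP: "(\<lambda>n. real (Q n) / real (P n)) \<longlonglongrightarrow> 0"
  proof -
    have "(\<lambda>n. (real (Q n) ^ 2 / real n) / (real (P n) * real (Q n) / real n)) \<longlonglongrightarrow> 0 / c"
      using c by (intro tendsto_divide Q2n PQ) auto
    moreover have "eventually (\<lambda>n. (real (Q n) ^ 2 / real n) / (real (P n) * real (Q n) / real n)
        = real (Q n) / real (P n)) sequentially"
      using eventually_ge_at_top[of 1]
    proof eventually_elim
      case (elim n)
      then have "Q n \<ge> 1" "P n \<ge> 1" using adm by auto
      then show ?case using elim by (simp add: field_simps power2_eq_square)
    qed
    ultimately show ?thesis by (simp add: tendsto_cong)
  qed
  show ?thesis using adm limQ' QP PQ by blast
qed


lemma close_contra:
  fixes F G :: "nat \<Rightarrow> real"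
  assumes R: "strict_mono R"
    and Fsmall: "\<forall>y>0. eventually (\<lambda>j. ereal (F (R j)) < y) sequentially"
    and G: "0 < Liminf sequentially (\<lambda>n. ereal (G n))"
    and dom: "frequently (\<lambda>j. G (R j) \<le> F (R j)) sequentially"
  shows False
proof -
  obtain y :: ereal where y: "0 < y" "y < Liminf sequentially (\<lambda>n. ereal (G n))"
    using G dense by blast
  have "eventually (\<lambda>n. y < ereal (G n)) sequentially"
    using le_Liminf_iff[THEN iffD1, OF order.refl, rule_format, OF y(2)] .
  then have ev: "eventually (\<lambda>j. y < ereal (G (R j))) sequentially"
    using filterlim_iff[THEN iffD1, OF filterlim_subseq[OF R], rule_format] by blast
  have "eventually (\<lambda>j. \<not> (G (R j) \<le> F (R j))) sequentially"
    using ev Fsmall[rule_format, OF y(1)]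
  proof eventually_elim
    case (elim j)
    then show ?case by (metis ereal_less_eq(3) order.strict_trans order.strict_trans1 order.irrefl)
  qed
  then show False using dom by (simp add: frequently_def)
qed

theorem lemma2p15:
  fixes f :: "nat \<Rightarrow> nat \<Rightarrow> nat \<Rightarrow> real"
  assumes nonneg: "\<And>n a b. 1 \<le> n \<Longrightarrow> a \<in> {1..n} \<Longrightarrow> b \<in> {1..n} \<Longrightarrow> 0 \<le> f n a b"
    and mono1: "\<And>n a a' b. 1 \<le> n \<Longrightarrow> a \<in> {1..n} \<Longrightarrow> a' \<in> {1..n} \<Longrightarrow> b \<in> {1..n} \<Longrightarrow>
                  a \<le> a' \<Longrightarrow> f n a b \<le> f n a' b"
    and mono2: "\<And>n a b b'. 1 \<le> n \<Longrightarrow> a \<in> {1..n} \<Longrightarrow> b \<in> {1..n} \<Longrightarrow> b' \<in> {1..n} \<Longrightarrow>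
                  b \<le> b' \<Longrightarrow> f n a b \<le> f n a b'"
    and case_i: "\<And>p q. admissible p q \<Longrightarrow> (\<forall>n\<ge>1. q n = 1) \<Longrightarrow>
                  (\<exists>c. 0 < c \<and> c < 1 \<and> (\<lambda>n. real (p n) / real n) \<longlonglongrightarrow> c) \<Longrightarrow>
                  Liminf sequentially (\<lambda>n. ereal (f n (p n) (q n))) > 0"
    and case_ii: "\<And>p q. admissible p q \<Longrightarrow> filterlim q at_top sequentially \<Longrightarrow>
                  (\<lambda>n. real (q n) / real (p n)) \<longlonglongrightarrow> 0 \<Longrightarrow>
                  (\<exists>c. 0 < c \<and> (\<lambda>n. real (p n) * real (q n) / real n) \<longlonglongrightarrow> c) \<Longrightarrow>
                  Liminf sequentially (\<lambda>n. ereal (f n (p n) (q n))) > 0"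
    and case_iii: "\<And>p q. admissible p q \<Longrightarrow>
                  (\<exists>a. 0 < a \<and> (\<lambda>n. real (p n) / sqrt (real n)) \<longlonglongrightarrow> a) \<Longrightarrow>
                  (\<exists>b. 0 < b \<and> (\<lambda>n. real (q n) / sqrt (real n)) \<longlonglongrightarrow> b) \<Longrightarrow>
                  Liminf sequentially (\<lambda>n. ereal (f n (p n) (q n))) > 0"
  shows "\<And>p q. admissible p q \<Longrightarrow>
                  (\<exists>c. 0 < c \<and> (\<lambda>n. real (p n) * real (q n) / real n) \<longlonglongrightarrow> c) \<Longrightarrow>
                  Liminf sequentially (\<lambda>n. ereal (f n (p n) (q n))) > 0"

proof -
  fix p q assume adm: "admissible p q"
    and ex: "\<exists>c. 0 < c \<and> (\<lambda>n. real (p n) * real (q n) / real n) \<longlonglongrightarrow> c"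
  from ex obtain c where c: "0 < c" and lim: "(\<lambda>n. real (p n) * real (q n) / real n) \<longlonglongrightarrow> c"
    by blast
  have admn: "1 \<le> q n \<and> q n \<le> p n \<and> p n \<le> n" if "n \<ge> 1" for n
    using adm that unfolding admissible_def by blast
  define F where "F = (\<lambda>n. f n (p n) (q n))"
  show "Liminf sequentially (\<lambda>n. ereal (f n (p n) (q n))) > 0"
  proof (rule ccontr)
    assume "\<not> ?thesis"
    then have L0: "Liminf sequentially (\<lambda>n. ereal (F n)) \<le> 0" by (simp add: F_def not_less)
    obtain R where R: "strict_mono R" and RL: "(\<lambda>j. ereal (F (R j))) \<longlonglongrightarrow> liminf (\<lambda>n. ereal (F n))"
      using liminf_subseq_lim[of "\<lambda>n. ereal (F n)"] by (auto simp: comp_def)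
    have Fsmall: "\<forall>y>0. eventually (\<lambda>j. ereal (F (R j)) < y) sequentially"
      using order_tendstoD(2)[OF RL] L0 by (meson le_less_trans)
    have Rge: "eventually (\<lambda>j. 1 \<le> R j) sequentially"
      using eventually_ge_at_top[of 1] by eventually_elim (meson R le_trans seq_suble)
    have limR: "(\<lambda>j. real (p (R j)) * real (q (R j)) / real (R j)) \<longlonglongrightarrow> c"
      using LIMSEQ_subseq_LIMSEQ[OF lim R] by (simp add: comp_def)
    have evc: "eventually (\<lambda>j. c/2 < real (p (R j)) * real (q (R j)) / real (R j) \<and> 1 \<le> R j) sequentially"
      using order_tendstoD(1)[OF limR, of "c/2"] c Rge by (auto intro: eventually_conj)
    consider (A) "\<exists>M::nat. frequently (\<lambda>j. q (R j) \<le> M) sequentially"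
      | (C) "\<exists>\<delta>>0. frequently (\<lambda>j. \<delta> * real (p (R j)) \<le> real (q (R j))) sequentially"
      | (B) "\<not> (\<exists>M::nat. frequently (\<lambda>j. q (R j) \<le> M) sequentially)"
            "\<not> (\<exists>\<delta>>0. frequently (\<lambda>j. \<delta> * real (p (R j)) \<le> real (q (R j))) sequentially)"
      by blast
    then show False
    proof cases
      case A
      then obtain M where M: "frequently (\<lambda>j. q (R j) \<le> M) sequentially" by blast
      define M' where "M' = real (max 1 M)"
      have M'pos: "M' \<ge> 1" unfolding M'_def by simp
      define \<alpha> where "\<alpha> = min (c / (2 * M')) (1/2)"
      have apos: "\<alpha> > 0" "\<alpha> < 1" using c M'pos unfolding \<alpha>_def by auto
      have aM: "\<alpha> * M' \<le> c / 2"
      proof -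
        have "\<alpha> \<le> c / (2 * M')" by (simp add: \<alpha>_def)
        then have "\<alpha> * M' \<le> c / (2 * M') * M'" using M'pos by (intro mult_right_mono) auto
        also have "\<dots> = c / 2" using M'pos by simp
        finally show ?thesis .
      qed
      define A where "A = (\<lambda>n::nat. max 1 (nat \<lfloor>\<alpha> * real n\<rfloor>))"
      have admA: "admissible A (\<lambda>n. 1)" unfolding admissible_def
      proof (intro allI impI)
        fix n :: nat assume n: "n \<ge> 1"
        have "\<alpha> * real n \<le> real n" using apos n by simp
        then have "nat \<lfloor>\<alpha> * real n\<rfloor> \<le> n" by linarith
        then show "1 \<le> (1::nat) \<and> (1::nat) \<le> A n \<and> A n \<le> n" unfolding A_def using n by simp
      qed
      have limA: "(\<lambda>n. real (A n) / real n) \<longlonglongrightarrow> \<alpha>"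
        using floor_lim[OF filterlim_real_sequentially apos(1)] unfolding A_def .
      have pos: "0 < Liminf sequentially (\<lambda>n. ereal (f n (A n) 1))"
        using case_i[of A "\<lambda>n. 1"] admA apos limA by auto
      show False
      proof (rule close_contra[OF R Fsmall pos])
        have "eventually (\<lambda>j. q (R j) \<le> M \<longrightarrow> f (R j) (A (R j)) 1 \<le> F (R j)) sequentially"
          using evc
        proof eventually_elim
          case (elim j)
          define m where "m = R j"
          have m: "m \<ge> 1" "c/2 < real (p m) * real (q m) / real m" using elim unfolding m_def by auto
          have am: "1 \<le> q m" "q m \<le> p m" "p m \<le> m" using admn[OF m(1)] by auto
          show ?case unfolding m_def[symmetric]
          proof
            assume qM: "q m \<le> M"
            have mpos: "real m > 0" using m by simp
            have h1: "c / 2 * real m < real (p m) * real (q m)" using m(2) mpos by (simp add: pos_less_divide_eq)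
            have "real (q m) \<le> M'" using qM unfolding M'_def by simp
            then have h2: "real (p m) * real (q m) \<le> real (p m) * M'" by (simp add: mult_left_mono)
            have "(\<alpha> * M') * real m \<le> c / 2 * real m" using aM mpos by (intro mult_right_mono) auto
            then have h3: "\<alpha> * real m * M' \<le> c / 2 * real m" by (simp add: mult_ac)
            have "\<alpha> * real m * M' < real (p m) * M'" using h1 h2 h3 by linarith
            then have "\<alpha> * real m < real (p m)" using M'pos by simp
            then have "nat \<lfloor>\<alpha> * real m\<rfloor> \<le> p m" by linarith
            then have Ap: "A m \<le> p m" unfolding A_def using am by simp
            have A1: "A m \<ge> 1" unfolding A_def by simp
            have "f m (A m) 1 \<le> f m (p m) 1"
              using mono1[of m "A m" "p m" 1] m(1) Ap A1 am by auto
            also have "\<dots> \<le> f m (p m) (q m)"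
              using mono2[of m "p m" 1 "q m"] m(1) am by auto
            finally show "f m (A m) 1 \<le> F m" unfolding F_def .
          qed
        qed
        then show "frequently (\<lambda>j. f (R j) (A (R j)) 1 \<le> F (R j)) sequentially"
          using M by (rule frequently_mp)
      qed
    next
      case C
      then obtain \<delta> where dpos: "\<delta> > 0"
        and D: "frequently (\<lambda>j. \<delta> * real (p (R j)) \<le> real (q (R j))) sequentially" by blast
      define \<beta> where "\<beta> = min 1 (sqrt (\<delta> * c / 2))"
      have bpos: "\<beta> > 0" "\<beta> \<le> 1" using dpos c unfolding \<beta>_def by auto
      have b2: "\<beta>^2 \<le> \<delta> * c / 2"
      proof -
        have "\<beta>^2 \<le> (sqrt (\<delta> * c / 2))^2" unfolding \<beta>_def using bpos
          by (intro power_mono) (auto simp: \<beta>_def)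
        then show ?thesis using dpos c by simp
      qed
      define Cs where "Cs = (\<lambda>n::nat. max 1 (nat \<lfloor>\<beta> * sqrt (real n)\<rfloor>))"
      have sqle: "sqrt x \<le> x" if "x \<ge> 1" for x :: real
      proof -
        have s1: "sqrt x \<ge> 1" using that by simp
        have "1 * sqrt x \<le> sqrt x * sqrt x" by (rule mult_right_mono) (use s1 in auto)
        then show ?thesis using that by simp
      qed
      have admC: "admissible Cs Cs" unfolding admissible_def
      proof (intro allI impI)
        fix n :: nat assume n: "n \<ge> 1"
        have "\<beta> * sqrt (real n) \<le> sqrt (real n)" using bpos by (simp add: mult_left_le_one_le)
        also have "\<dots> \<le> real n" using sqle n by simp
        finally have "nat \<lfloor>\<beta> * sqrt (real n)\<rfloor> \<le> n" by linarith
        then show "1 \<le> Cs n \<and> Cs n \<le> Cs n \<and> Cs n \<le> n" unfolding Cs_def using n by simp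
      qed
      have gs: "filterlim (\<lambda>n. sqrt (real n)) at_top sequentially"
        using filterlim_compose[OF sqrt_at_top filterlim_real_sequentially] .
      have limC: "(\<lambda>n. real (Cs n) / sqrt (real n)) \<longlonglongrightarrow> \<beta>"
        using floor_lim[OF gs bpos(1)] unfolding Cs_def .
      have pos: "0 < Liminf sequentially (\<lambda>n. ereal (f n (Cs n) (Cs n)))"
        using case_iii[of Cs Cs] admC bpos limC by auto
      show False
      proof (rule close_contra[OF R Fsmall pos])
        have "eventually (\<lambda>j. \<delta> * real (p (R j)) \<le> real (q (R j)) \<longrightarrow> f (R j) (Cs (R j)) (Cs (R j)) \<le> F (R j)) sequentially"
          using evc
        proof eventually_elim
          case (elim j)
          define m where "m = R j"
          have m: "m \<ge> 1" "c/2 < real (p m) * real (q m) / real m" using elim unfolding m_def by auto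
          have am: "1 \<le> q m" "q m \<le> p m" "p m \<le> m" using admn[OF m(1)] by auto
          show ?case unfolding m_def[symmetric]
          proof
            assume dq: "\<delta> * real (p m) \<le> real (q m)"
            have mpos: "real m > 0" using m by simp
            have h1: "c / 2 * real m < real (p m) * real (q m)" using m(2) mpos by (simp add: pos_less_divide_eq)
            have h2: "\<delta> * real (p m) * real (q m) \<le> real (q m) * real (q m)"
              using dq by (simp add: mult_right_mono)
            have h3: "\<delta> * (c / 2 * real m) < \<delta> * (real (p m) * real (q m))"
              using h1 dpos by simp
            have h4: "\<beta>^2 * real m \<le> \<delta> * c / 2 * real m" using b2 mpos by (simp add: mult_right_mono)
            have "(\<beta> * sqrt (real m))^2 = \<beta>^2 * real m" by (simp add: power_mult_distrib)
            also have "\<dots> < real (q m) ^ 2" using h2 h3 h4 by (simp add: power2_eq_square mult_ac)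
            finally have "\<beta> * sqrt (real m) < real (q m)" by (rule power2_less_imp_less) simp
            then have "nat \<lfloor>\<beta> * sqrt (real m)\<rfloor> \<le> q m" by linarith
            then have Cq: "Cs m \<le> q m" unfolding Cs_def using am by simp
            have C1: "Cs m \<ge> 1" unfolding Cs_def by simp
            have "f m (Cs m) (Cs m) \<le> f m (p m) (Cs m)"
              using mono1[of m "Cs m" "p m" "Cs m"] m(1) Cq C1 am by auto
            also have "\<dots> \<le> f m (p m) (q m)"
              using mono2[of m "p m" "Cs m" "q m"] m(1) Cq C1 am by auto
            finally show "f m (Cs m) (Cs m) \<le> F m" unfolding F_def .
          qed
        qed
        then show "frequently (\<lambda>j. f (R j) (Cs (R j)) (Cs (R j)) \<le> F (R j)) sequentially"
          using D by (rule frequently_mp)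
      qed
    next
      case B
      have qinf: "filterlim (\<lambda>j. q (R j)) at_top sequentially"
        unfolding filterlim_at_top
      proof
        fix Z :: nat
        have "eventually (\<lambda>j. \<not> q (R j) \<le> Z) sequentially" using B(1) by (simp add: frequently_def)
        then show "eventually (\<lambda>j. Z \<le> q (R j)) sequentially" by (auto elim: eventually_mono)
      qed
      have rat: "(\<lambda>j. real (q (R j)) / real (p (R j))) \<longlonglongrightarrow> 0"
      proof (rule order_tendstoI)
        fix a :: real assume "a < 0"
        then show "eventually (\<lambda>j. a < real (q (R j)) / real (p (R j))) sequentially"
          by (auto intro!: always_eventually less_le_trans[of a 0])
      next
        fix a :: real assume a: "0 < a"
        have "eventually (\<lambda>j. \<not> a * real (p (R j)) \<le> real (q (R j))) sequentially"
          using B(2) a by (simp add: frequently_def)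
        then show "eventually (\<lambda>j. real (q (R j)) / real (p (R j)) < a) sequentially"
          using evc
        proof eventually_elim
          case (elim j)
          have "p (R j) \<ge> 1" using admn[of "R j"] elim by auto
          then show ?case using elim by (simp add: divide_less_eq mult.commute)
        qed
      qed
      obtain P Q :: "nat \<Rightarrow> nat" where admPQ: "\<forall>n\<ge>1. 1 \<le> Q n \<and> Q n \<le> P n \<and> P n \<le> n"
        and limQ: "filterlim Q at_top sequentially" and QP: "(\<lambda>n. real (Q n) / real (P n)) \<longlonglongrightarrow> 0"
        and PQ: "(\<lambda>n. real (P n) * real (Q n) / real n) \<longlonglongrightarrow> c"
        using default_ii[OF c] by blast
      define p' where "p' = (\<lambda>n. if n \<in> range R then p n else P n)"
      define q' where "q' = (\<lambda>n. if n \<in> range R then q n else Q n)"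
      have adm': "admissible p' q'" unfolding admissible_def p'_def q'_def
        using admn admPQ by auto
      have l1: "filterlim q' at_top sequentially"
        unfolding q'_def by (rule interleave[OF R qinf limQ])
      have e2: "(\<lambda>n. real (q' n) / real (p' n)) =
          (\<lambda>n. if n \<in> range R then real (q n) / real (p n) else real (Q n) / real (P n))"
        unfolding p'_def q'_def by auto
      have l2: "(\<lambda>n. real (q' n) / real (p' n)) \<longlonglongrightarrow> 0"
        unfolding e2 by (rule interleave[OF R rat QP])
      have e3: "(\<lambda>n. real (p' n) * real (q' n) / real n) =
          (\<lambda>n. if n \<in> range R then real (p n) * real (q n) / real n else real (P n) * real (Q n) / real n)"
        unfolding p'_def q'_def by auto
      have l3: "(\<lambda>n. real (p' n) * real (q' n) / real n) \<longlonglongrightarrow> c"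
        unfolding e3 by (rule interleave[OF R limR PQ])
      have pos: "0 < Liminf sequentially (\<lambda>n. ereal (f n (p' n) (q' n)))"
        using case_ii[OF adm' l1 l2] l3 c by blast
      show False
      proof (rule close_contra[OF R Fsmall pos])
        show "frequently (\<lambda>j. f (R j) (p' (R j)) (q' (R j)) \<le> F (R j)) sequentially"
          by (rule eventually_frequently) (auto simp: p'_def q'_def F_def)
      qed
    qed
  qed
qed

end
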